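(* Let $(\mathcal{X},\|\cdot\|)$ be a real Banach space, $\mathcal{E}$ a measurable space, $Q,P_e:\mathcal{X}\to\mathcal{X}$ with $\|Q(\theta_1)-Q(\theta_2)\|\le\rho\|\theta_1-\theta_2\|$ ($\rho\in[0,1)$, $\theta^\star$ the unique fixed point of $Q$) and $\|P_e(\theta_1)-P_e(\theta_2)\|\le L\|\theta_1-\theta_2\|$ for all $e$ ($L\ge0$). Let $P(\cdot\mid\theta)$ be a probability kernel from $\mathcal{X}$ to $\mathcal{E}$, $\theta_0\in\mathcal{X}$, and let $e_t$ be drawn from $P(\cdot\mid\theta_t)$ independently of $\mathcal{F}_t:=\sigma(e_0,\dots,e_{t-1})$ given $\theta_t$, with $\theta_{t+1}=Q(P_{e_t}(\theta_t))$. Let $W_e:=\|P_e(\theta^\star)-\theta^\star\|$ and assume there are $0\le\sigma\le M$ with $\int W_e\,P(de\mid\theta)\le\sigma$ and $\operatorname{ess\,sup}_{e\sim P(\cdot\mid\theta)}W_e\le M$ for every $\theta\in\mathcal{X}$. Let $\gamma:=\rho L$ and $u_t:=\mathbb{E}\|\theta_t-\theta^\star\|$. Then: (i) if $\gamma<1$, $u_t\le\gamma^tu_0+\rho\sigma\frac{1-\gamma^t}{1-\gamma}$; (ii) $\mathbb{E}[\Omega(\theta_t;e_t)]\le2\gamma u_t+(1+\rho)\sigma$; (iii) if $\sigma=0$ and $\gamma<1$, then almost surely $\|\theta_t-\theta^\star\|\le\gamma^t\|\theta_0-\theta^\star\|$ and $\Omega(\theta_t;e_t)\le2\gamma^{t+1}\|\theta_0-\theta^\star\|$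 for all $t$.
   Context: The order-gap is $\Omega(\theta;e):=\|Q(P_e(\theta))-P_e(Q(\theta))\|$. *)

theory Defs
  imports "HOL-Probability.Probability"
begin

primrec traj :: "('x \<Rightarrow> 'x) \<Rightarrow> ('e \<Rightarrow> 'x \<Rightarrow> 'x) \<Rightarrow> 'x \<Rightarrow> (nat \<Rightarrow> 'w \<Rightarrow> 'e) \<Rightarrow> nat \<Rightarrow> 'w \<Rightarrow> 'x"
  where
    "traj Q P \<theta>0 e 0 \<omega> = \<theta>0"
  | "traj Q P \<theta>0 e (Suc t) \<omega> = Q (P (e t \<omega>) (traj Q P \<theta>0 e t \<omega>))"

definition order_gap :: "('x::real_normed_vector \<Rightarrow> 'x) \<Rightarrow> ('e \<Rightarrow> 'x \<Rightarrow> 'x) \<Rightarrow> 'x \<Rightarrow> 'e \<Rightarrow> real"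
  where "order_gap Q P \<theta> e' = norm (Q (P e' \<theta>) - P e' (Q \<theta>))"

definition nat_filt :: "'w measure \<Rightarrow> 'e measure \<Rightarrow> (nat \<Rightarrow> 'w \<Rightarrow> 'e) \<Rightarrow> nat \<Rightarrow> 'w set set"
  where "nat_filt M E e t =
     sigma_sets (space M) (\<Union>i<t. {e i -` A \<inter> space M | A. A \<in> sets E})"

end

theory Submission
  imports Defs
begin

lemma det_bound1:
  fixes Q :: "'x::real_normed_vector \<Rightarrow> 'x"
  assumes Q_contr: "\<And>x y. norm (Q x - Q y) \<le> \<rho> * norm (x - y)"
    and Qs: "Q s = s" and rho: "0 \<le> \<rho>"
    and P_lip: "\<And>a x y. norm (P a x - P a y) \<le> L * norm (x - y)"
  shows "norm (Q (P a th) - s) \<le> \<rho> * L * norm (th - s) + \<rho> * norm (P a s - s)"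
proof -
  have "norm (Q (P a th) - s) = norm (Q (P a th) - Q s)" using Qs by simp
  also have "\<dots> \<le> \<rho> * norm (P a th - s)" by (rule Q_contr)
  also have "norm (P a th - s) \<le> norm (P a th - P a s) + norm (P a s - s)"
    by (metis diff_add_cancel norm_triangle_ineq add_diff_eq diff_diff_eq2)
  also have "\<dots> \<le> L * norm (th - s) + norm (P a s - s)" using P_lip by simp
  finally have "norm (Q (P a th) - s) \<le> \<rho> * (L * norm (th - s) + norm (P a s - s))"
    using rho by (simp add: mult_left_mono)
  thus ?thesis by (simp add: algebra_simps)
qed

lemma det_bound2:
  fixes Q :: "'x::real_normed_vector \<Rightarrow> 'x"
  assumes Q_contr: "\<And>x y. norm (Q x - Q y) \<le> \<rho> * norm (x - y)"
    and Qs: "Q s = s" and rho: "0 \<le> \<rho>" and L: "0 \<le> L"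
    and P_lip: "\<And>a x y. norm (P a x - P a y) \<le> L * norm (x - y)"
  shows "order_gap Q P th a \<le> 2 * (\<rho> * L) * norm (th - s) + (1 + \<rho>) * norm (P a s - s)"
proof -
  have b1: "norm (Q (P a th) - s) \<le> \<rho> * L * norm (th - s) + \<rho> * norm (P a s - s)"
    by (rule det_bound1[OF Q_contr Qs rho P_lip])
  have q: "norm (Q th - s) \<le> \<rho> * norm (th - s)" using Q_contr[of th s] Qs by simp
  have q2: "L * norm (Q th - s) \<le> L * (\<rho> * norm (th - s))" using q L by (simp add: mult_left_mono)
  have "norm (P a (Q th) - s) \<le> norm (P a (Q th) - P a s) + norm (P a s - s)"
    by (metis norm_triangle_ineq add_diff_eq diff_add_cancel diff_diff_eq2)
  also have "\<dots> \<le> L * norm (Q th - s) + norm (P a s - s)" using P_lip by simp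
  also have "\<dots> \<le> L * (\<rho> * norm (th - s)) + norm (P a s - s)" using q2 by simp
  finally have b2: "norm (P a (Q th) - s) \<le> \<rho> * L * norm (th - s) + norm (P a s - s)"
    by (simp add: algebra_simps)
  have "order_gap Q P th a \<le> norm (Q (P a th) - s) + norm (P a (Q th) - s)"
  proof -
    have "Q (P a th) - P a (Q th) = (Q (P a th) - s) - (P a (Q th) - s)" by simp
    thus ?thesis unfolding order_gap_def by (metis norm_triangle_ineq4)
  qed
  also have "\<dots> \<le> 2 * (\<rho> * L) * norm (th - s) + (1 + \<rho>) * norm (P a s - s)"
    using b1 b2 by (simp add: algebra_simps)
  finally show ?thesis .
qed

theorem theorem4p22:
  fixes Q :: "'x::banach \<Rightarrow> 'x"
    and P :: "'e \<Rightarrow> 'x \<Rightarrow> 'x"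
    and E :: "'e measure"
    and K :: "'x \<Rightarrow> 'e measure"
    and M :: "'w measure"
    and e :: "nat \<Rightarrow> 'w \<Rightarrow> 'e"
    and \<rho> L \<sigma> Mb :: real
    and \<theta>0 \<theta>s :: 'x
  assumes rho: "0 \<le> \<rho>" "\<rho> < 1"
    and Q_contr: "\<And>x y. norm (Q x - Q y) \<le> \<rho> * norm (x - y)"
    and Q_fix: "\<And>x. Q x = x \<longleftrightarrow> x = \<theta>s"
    and L: "0 \<le> L"
    and P_lip: "\<And>a x y. norm (P a x - P a y) \<le> L * norm (x - y)"
    and P_meas: "(\<lambda>(a, x). P a x) \<in> E \<Otimes>\<^sub>M borel \<rightarrow>\<^sub>M borel"
    and K_kernel: "K \<in> borel \<rightarrow>\<^sub>M prob_algebra E"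
    and M_prob: "prob_space M"
    and e_meas: "\<And>t. e t \<in> M \<rightarrow>\<^sub>M E"
    and e_cond: "\<And>t B A. B \<in> nat_filt M E e t \<Longrightarrow> A \<in> sets E \<Longrightarrow>
        measure M (B \<inter> (e t -` A \<inter> space M))
          = (\<integral>\<omega>. indicator B \<omega> * measure (K (traj Q P \<theta>0 e t \<omega>)) A \<partial>M)"
    and sig: "0 \<le> \<sigma>" "\<sigma> \<le> Mb"
    and W_mean: "\<And>\<theta>. (\<integral>a. norm (P a \<theta>s - \<theta>s) \<partial>K \<theta>) \<le> \<sigma>"
    and W_sup: "\<And>\<theta>. esssup (K \<theta>) (\<lambda>a. ereal (norm (P a \<theta>s - \<theta>s))) \<le> ereal Mb"
  shows
    "(\<rho> * L < 1 \<longrightarrow>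
        (\<forall>t. (\<integral>\<omega>. norm (traj Q P \<theta>0 e t \<omega> - \<theta>s) \<partial>M)
              \<le> (\<rho> * L) ^ t * (\<integral>\<omega>. norm (traj Q P \<theta>0 e 0 \<omega> - \<theta>s) \<partial>M)
                + \<rho> * \<sigma> * (1 - (\<rho> * L) ^ t) / (1 - \<rho> * L)))
     \<and> (\<forall>t. (\<integral>\<omega>. order_gap Q P (traj Q P \<theta>0 e t \<omega>) (e t \<omega>) \<partial>M)
              \<le> 2 * (\<rho> * L) * (\<integral>\<omega>. norm (traj Q P \<theta>0 e t \<omega> - \<theta>s) \<partial>M)
                + (1 + \<rho>) * \<sigma>)
     \<and> (\<sigma> = 0 \<and> \<rho> * L < 1 \<longrightarrow>
        (AE \<omega> in M. \<forall>t.
            norm (traj Q P \<theta>0 e t \<omega> - \<theta>s) \<le> (\<rho> * L) ^ t * norm (\<theta>0 - \<theta>s)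
          \<and> order_gap Q P (traj Q P \<theta>0 e t \<omega>) (e t \<omega>)
              \<le> 2 * (\<rho> * L) ^ (t + 1) * norm (\<theta>0 - \<theta>s)))"
proof -
  interpret prob_space M by (rule M_prob)
  define th where "th = traj Q P \<theta>0 e"
  define W where "W = (\<lambda>a. norm (P a \<theta>s - \<theta>s))"
  have Qs: "Q \<theta>s = \<theta>s" using Q_fix by simp
  have Qlip: "\<rho>-lipschitz_on UNIV Q"
    unfolding lipschitz_on_def dist_norm using rho Q_contr by auto
  have Qmeas: "Q \<in> borel_measurable borel"
    by (rule borel_measurable_continuous_onI[OF lipschitz_on_continuous_on[OF Qlip]])
  have Pm: "(\<lambda>\<omega>. P (f \<omega>) (g \<omega>)) \<in> borel_measurable N"
    if "f \<in> N \<rightarrow>\<^sub>M E" "g \<in> borel_measurable N" for f g and N :: "'z measure"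
    using measurable_compose[OF measurable_Pair[OF that] P_meas] by simp
  have th_meas: "th t \<in> borel_measurable M" for t
  proof (induction t)
    case 0 show ?case by (simp add: th_def)
  next
    case (Suc t)
    have "(\<lambda>\<omega>. Q (P (e t \<omega>) (th t \<omega>))) \<in> borel_measurable M"
      by (rule measurable_compose[OF Pm[OF e_meas Suc] Qmeas])
    thus ?case by (simp add: th_def)
  qed
  have nm: "(\<lambda>x. norm (x - \<theta>s)) \<in> borel_measurable borel"
    by (intro borel_measurable_continuous_onI continuous_intros)
  have W_meas: "W \<in> borel_measurable E"
  proof -
    have "(\<lambda>a. P a \<theta>s) \<in> borel_measurable E"
      by (rule Pm[OF measurable_ident_sets[OF refl] measurable_const]) simp
    from measurable_compose[OF this nm] show ?thesis by (simp add: W_def)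
  qed
  have Kprob: "prob_space (K x) \<and> sets (K x) = sets E" for x
    using measurable_space[OF K_kernel, of x] by (simp add: space_prob_algebra)
  have KW: "(\<integral>\<^sup>+a. ennreal (W a) \<partial>K x) \<le> ennreal \<sigma>" for x
  proof -
    interpret Kp: prob_space "K x" using Kprob by simp
    have Wm: "W \<in> borel_measurable (K x)"
      using W_meas measurable_cong_sets Kprob by blast
    have "AE a in K x. ereal (W a) \<le> ereal Mb"
      using esssup_AE[of "\<lambda>a. ereal (W a)" "K x"] W_sup[of x] unfolding W_def
      by (elim eventually_mono) (metis order_trans)
    hence ae: "AE a in K x. norm (W a) \<le> norm Mb"
      using sig by (auto elim!: eventually_mono simp: W_def)
    have int: "integrable (K x) W"
      by (rule Bochner_Integration.integrable_bound[OF _ Wm ae]) simp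
    have "(\<integral>\<^sup>+a. ennreal (W a) \<partial>K x) = ennreal (\<integral>a. W a \<partial>K x)"
      by (rule nn_integral_eq_integral[OF int]) (simp add: W_def)
    also have "\<dots> \<le> ennreal \<sigma>" using W_mean[of x] by (simp add: W_def ennreal_leI)
    finally show ?thesis .
  qed
  have Km: "(\<lambda>\<omega>. K (th t \<omega>)) \<in> M \<rightarrow>\<^sub>M subprob_algebra E" for t
    by (rule measurable_prob_algebraD[OF measurable_compose[OF th_meas K_kernel]])
  have distr_eq: "distr M E (e t) = M \<bind> (\<lambda>\<omega>. K (th t \<omega>))" for t
  proof (rule measure_eqI)
    show "sets (distr M E (e t)) = sets (M \<bind> (\<lambda>\<omega>. K (th t \<omega>)))"
      using Kprob not_empty by (subst sets_bind) auto
  next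
    fix A assume "A \<in> sets (distr M E (e t))"
    hence A: "A \<in> sets E" by simp
    have mm: "(\<lambda>\<omega>. measure (K (th t \<omega>)) A) \<in> borel_measurable M"
      by (rule measurable_compose[OF measurable_compose[OF th_meas K_kernel]
            measurable_measure_prob_algebra[OF A]])
    have intm: "integrable M (\<lambda>\<omega>. measure (K (th t \<omega>)) A)"
      by (rule Bochner_Integration.integrable_bound[where f="\<lambda>_. 1::real"]) (auto simp: mm intro!: prob_space.prob_le_1 Kprob[THEN conjunct1])
    have "emeasure (distr M E (e t)) A = emeasure M (e t -` A \<inter> space M)"
      by (rule emeasure_distr[OF e_meas A])
    also have "\<dots> = ennreal (measure M (e t -` A \<inter> space M))"
      by (simp add: emeasure_eq_measure)
    also have "measure M (e t -` A \<inter> space M) = measure M (space M \<inter> (e t -` A \<inter> space M))"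
      by (simp add: Int_absorb1)
    also have "\<dots> = (\<integral>\<omega>. indicator (space M) \<omega> * measure (K (th t \<omega>)) A \<partial>M)"
      unfolding th_def by (rule e_cond[OF _ A]) (simp add: nat_filt_def sigma_sets_top)
    also have "\<dots> = (\<integral>\<omega>. measure (K (th t \<omega>)) A \<partial>M)"
      by (rule Bochner_Integration.integral_cong) auto
    also have "ennreal \<dots> = (\<integral>\<^sup>+\<omega>. ennreal (measure (K (th t \<omega>)) A) \<partial>M)"
      by (rule nn_integral_eq_integral[OF intm, symmetric]) simp
    also have "\<dots> = (\<integral>\<^sup>+\<omega>. emeasure (K (th t \<omega>)) A \<partial>M)"
      by (rule nn_integral_cong) (metis Kprob prob_space_def finite_measure.emeasure_eq_measure)
    also have "\<dots> = emeasure (M \<bind> (\<lambda>\<omega>. K (th t \<omega>))) A"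
      by (rule emeasure_bind[OF not_empty Km A, symmetric])
    finally show "emeasure (distr M E (e t)) A = emeasure (M \<bind> (\<lambda>\<omega>. K (th t \<omega>))) A" .
  qed
  have Wem: "(\<lambda>\<omega>. W (e t \<omega>)) \<in> borel_measurable M" for t
    by (rule measurable_compose[OF e_meas W_meas])
  have EW: "(\<integral>\<^sup>+\<omega>. ennreal (W (e t \<omega>)) \<partial>M) \<le> ennreal \<sigma>" for t
  proof -
    have "(\<integral>\<^sup>+\<omega>. ennreal (W (e t \<omega>)) \<partial>M) = (\<integral>\<^sup>+a. ennreal (W a) \<partial>distr M E (e t))"
      using measurable_compose[OF W_meas measurable_ennreal]
      by (intro nn_integral_distr[OF e_meas, symmetric]) simp
    also have "\<dots> = (\<integral>\<^sup>+\<omega>. (\<integral>\<^sup>+a. ennreal (W a) \<partial>K (th t \<omega>)) \<partial>M)"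
      unfolding distr_eq by (rule nn_integral_bind[OF _ Km]) (rule measurable_compose[OF W_meas measurable_ennreal])
    also have "\<dots> \<le> (\<integral>\<^sup>+\<omega>. ennreal \<sigma> \<partial>M)"
      by (rule nn_integral_mono) (rule KW)
    also have "\<dots> = ennreal \<sigma>" by (simp add: emeasure_space_1)
    finally show ?thesis .
  qed
  have EWi: "integrable M (\<lambda>\<omega>. W (e t \<omega>))" for t
  proof (rule integrableI_bounded[OF Wem])
    have "(\<integral>\<^sup>+\<omega>. ennreal (norm (W (e t \<omega>))) \<partial>M) = (\<integral>\<^sup>+\<omega>. ennreal (W (e t \<omega>)) \<partial>M)"
      by (simp add: W_def)
    also have "\<dots> < \<infinity>" using EW[of t] by (simp add: le_less_trans)
    finally show "(\<integral>\<^sup>+\<omega>. ennreal (norm (W (e t \<omega>))) \<partial>M) < \<infinity>" .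
  qed
  have EWle: "(\<integral>\<omega>. W (e t \<omega>) \<partial>M) \<le> \<sigma>" for t
  proof -
    have "ennreal (\<integral>\<omega>. W (e t \<omega>) \<partial>M) = (\<integral>\<^sup>+\<omega>. ennreal (W (e t \<omega>)) \<partial>M)"
      by (rule nn_integral_eq_integral[OF EWi, symmetric]) (simp add: W_def)
    also have "\<dots> \<le> ennreal \<sigma>" by (rule EW)
    finally show ?thesis using sig by (simp add: ennreal_le_iff)
  qed
  have b1: "norm (th (Suc t) \<omega> - \<theta>s) \<le> \<rho> * L * norm (th t \<omega> - \<theta>s) + \<rho> * W (e t \<omega>)" for t \<omega>
    using det_bound1[OF Q_contr Qs rho(1) P_lip] by (simp add: th_def W_def)
  have b2: "order_gap Q P (th t \<omega>) (e t \<omega>) \<le> 2 * (\<rho> * L) * norm (th t \<omega> - \<theta>s) + (1 + \<rho>) * W (e t \<omega>)" for t \<omega>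
    using det_bound2[OF Q_contr Qs rho(1) L P_lip] by (simp add: W_def)
  have nmeas: "(\<lambda>\<omega>. norm (th t \<omega> - \<theta>s)) \<in> borel_measurable M" for t
    by (rule measurable_compose[OF th_meas nm])
  have thi: "integrable M (\<lambda>\<omega>. norm (th t \<omega> - \<theta>s))" for t
  proof (induction t)
    case 0 show ?case by (simp add: th_def)
  next
    case (Suc t)
    have "integrable M (\<lambda>\<omega>. \<rho> * L * norm (th t \<omega> - \<theta>s) + \<rho> * W (e t \<omega>))"
      using Suc EWi by auto
    thus ?case
      by (rule Bochner_Integration.integrable_bound[OF _ nmeas]) (auto intro!: always_eventually b1[THEN order_trans]
          simp: W_def rho L)
  qed
  define u where "u t = (\<integral>\<omega>. norm (th t \<omega> - \<theta>s) \<partial>M)" for t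
  have u_nn: "0 \<le> u t" for t unfolding u_def by simp
  have rec: "u (Suc t) \<le> \<rho> * L * u t + \<rho> * \<sigma>" for t
  proof -
    have "u (Suc t) \<le> (\<integral>\<omega>. \<rho> * L * norm (th t \<omega> - \<theta>s) + \<rho> * W (e t \<omega>) \<partial>M)"
      unfolding u_def using thi EWi b1 by (intro integral_mono) auto
    also have "\<dots> = \<rho> * L * u t + \<rho> * (\<integral>\<omega>. W (e t \<omega>) \<partial>M)"
      unfolding u_def using thi EWi by simp
    also have "\<dots> \<le> \<rho> * L * u t + \<rho> * \<sigma>"
      using EWle[of t] rho by (simp add: mult_left_mono)
    finally show ?thesis .
  qed
  have part1: "u t \<le> (\<rho> * L) ^ t * u 0 + \<rho> * \<sigma> * (1 - (\<rho> * L) ^ t) / (1 - \<rho> * L)"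
    if g: "\<rho> * L < 1" for t
  proof (induction t)
    case 0 show ?case by simp
  next
    case (Suc t)
    have gn: "0 \<le> \<rho> * L" using rho L by simp
    have "u (Suc t) \<le> \<rho> * L * u t + \<rho> * \<sigma>" by (rule rec)
    also have "\<dots> \<le> \<rho> * L * ((\<rho> * L) ^ t * u 0 + \<rho> * \<sigma> * (1 - (\<rho> * L) ^ t) / (1 - \<rho> * L)) + \<rho> * \<sigma>"
      using Suc gn by (simp add: mult_left_mono)
    also have "\<dots> = (\<rho> * L) ^ Suc t * u 0 + \<rho> * \<sigma> * (1 - (\<rho> * L) ^ Suc t) / (1 - \<rho> * L)"
      using g by (simp add: field_simps)
    finally show ?case .
  qed
  have part2: "(\<integral>\<omega>. order_gap Q P (th t \<omega>) (e t \<omega>) \<partial>M) \<le> 2 * (\<rho> * L) * u t + (1 + \<rho>) * \<sigma>" for t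
  proof (cases "integrable M (\<lambda>\<omega>. order_gap Q P (th t \<omega>) (e t \<omega>))")
    case True
    have "(\<integral>\<omega>. order_gap Q P (th t \<omega>) (e t \<omega>) \<partial>M)
        \<le> (\<integral>\<omega>. 2 * (\<rho> * L) * norm (th t \<omega> - \<theta>s) + (1 + \<rho>) * W (e t \<omega>) \<partial>M)"
      using True thi EWi b2 by (intro integral_mono) auto
    also have "\<dots> = 2 * (\<rho> * L) * u t + (1 + \<rho>) * (\<integral>\<omega>. W (e t \<omega>) \<partial>M)"
      unfolding u_def using thi EWi by simp
    also have "\<dots> \<le> 2 * (\<rho> * L) * u t + (1 + \<rho>) * \<sigma>"
      using EWle[of t] rho by (simp add: mult_left_mono)
    finally show ?thesis .
  next
    case False
    hence "(\<integral>\<omega>. order_gap Q P (th t \<omega>) (e t \<omega>) \<partial>M) = 0" by (rule not_integrable_integral_eq)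
    moreover have "0 \<le> 2 * (\<rho> * L) * u t + (1 + \<rho>) * \<sigma>" using rho L sig u_nn by simp
    ultimately show ?thesis by simp
  qed
  have part3: "AE \<omega> in M. \<forall>t. norm (th t \<omega> - \<theta>s) \<le> (\<rho> * L) ^ t * norm (\<theta>0 - \<theta>s)
          \<and> order_gap Q P (th t \<omega>) (e t \<omega>) \<le> 2 * (\<rho> * L) ^ (t + 1) * norm (\<theta>0 - \<theta>s)"
    if s0: "\<sigma> = 0"
  proof -
    have "AE \<omega> in M. W (e t \<omega>) = 0" for t
    proof -
      have "(\<integral>\<^sup>+\<omega>. ennreal (W (e t \<omega>)) \<partial>M) = 0" using EW[of t] s0 by simp
      hence "AE \<omega> in M. ennreal (W (e t \<omega>)) = 0"
        using measurable_compose[OF Wem measurable_ennreal]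
        by (subst nn_integral_0_iff_AE[symmetric]) auto
      thus ?thesis by (auto elim!: eventually_mono simp: W_def)
    qed
    hence "AE \<omega> in M. \<forall>t. W (e t \<omega>) = 0" by (simp add: AE_all_countable)
    thus ?thesis
    proof (rule eventually_mono)
      fix \<omega> assume z: "\<forall>t. W (e t \<omega>) = 0"
      have gn: "0 \<le> \<rho> * L" using rho L by simp
      have n: "norm (th t \<omega> - \<theta>s) \<le> (\<rho> * L) ^ t * norm (\<theta>0 - \<theta>s)" for t
      proof (induction t)
        case 0 show ?case by (simp add: th_def)
      next
        case (Suc t)
        have "norm (th (Suc t) \<omega> - \<theta>s) \<le> \<rho> * L * norm (th t \<omega> - \<theta>s)" using b1[of t \<omega>] z by simp
        also have "\<dots> \<le> \<rho> * L * ((\<rho> * L) ^ t * norm (\<theta>0 - \<theta>s))"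
          using Suc gn by (rule mult_left_mono)
        finally show ?case by simp
      qed
      show "\<forall>t. norm (th t \<omega> - \<theta>s) \<le> (\<rho> * L) ^ t * norm (\<theta>0 - \<theta>s)
          \<and> order_gap Q P (th t \<omega>) (e t \<omega>) \<le> 2 * (\<rho> * L) ^ (t + 1) * norm (\<theta>0 - \<theta>s)"
      proof (intro allI conjI)
        fix t
        show "norm (th t \<omega> - \<theta>s) \<le> (\<rho> * L) ^ t * norm (\<theta>0 - \<theta>s)" by (rule n)
        have "order_gap Q P (th t \<omega>) (e t \<omega>) \<le> 2 * (\<rho> * L) * norm (th t \<omega> - \<theta>s)"
          using b2[of t \<omega>] z by simp
        also have "\<dots> \<le> 2 * (\<rho> * L) * ((\<rho> * L) ^ t * norm (\<theta>0 - \<theta>s))"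
          using n[of t] gn by (simp add: mult_left_mono)
        finally show "order_gap Q P (th t \<omega>) (e t \<omega>) \<le> 2 * (\<rho> * L) ^ (t + 1) * norm (\<theta>0 - \<theta>s)"
          by (simp add: algebra_simps)
      qed
    qed
  qed
  show ?thesis
    using part1 part2 part3 unfolding u_def th_def by blast
qed

end
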